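(* Let $p\ge1$ and $\ell,\ell'\in(0,+\infty)$. Then the function \[ c\mapsto \mathscr{f}_p(\ell,\ell',c)=\int_{-\ell}^{\ell}\int_{-\ell'}^{\ell'}|x-y-c|^p\,\mathrm{d}y\,\mathrm{d}x,\qquad c\in\mathbb{R}, \] has $c=0$ as its unique minimiser. *)

theory Defs
  imports "HOL-Analysis.Analysis"
begin

definition fp :: "real \<Rightarrow> real \<Rightarrow> real \<Rightarrow> real \<Rightarrow> real" where
  "fp p l l' c = integral {-l..l} (\<lambda>x. integral {-l'..l'} (\<lambda>y. \<bar>x - y - c\<bar> powr p))"

end

theory Submission
  imports Defs
begin

lemma pos_integral:
  fixes g :: "real \<Rightarrow> real"
  assumes "a < b" "continuous_on {a..b} g" "\<And>x. x \<in> {a..b} \<Longrightarrow> g x \<ge> 0"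
    "t \<in> {a..b}" "g t > 0"
  shows "integral {a..b} g > 0"
proof -
  have "integral {a..b} g \<ge> 0"
    using assms by (intro integral_nonneg integrable_continuous_interval) auto
  moreover have "integral {a..b} g \<noteq> 0"
    using integral_cbox_eq_0_iff[of a b g] assms by auto
  ultimately show ?thesis by linarith
qed

lemma mid_pow:
  fixes u v p :: real
  assumes "p \<ge> 1" "u \<ge> 0" "v \<ge> 0"
  shows "((u + v) / 2) powr p \<le> (u powr p + v powr p) / 2"
proof (cases "u = 0 \<or> v = 0")
  case True
  have k: "(w / 2) powr p \<le> w powr p / 2" if "w \<ge> 0" for w :: real
  proof -
    have "(w / 2) powr p = w powr p / 2 powr p" using that by (simp add: powr_divide)
    moreover have "2 powr p \<ge> 2"
    proof -
      have "(2::real) powr 1 \<le> 2 powr p" using assms(1) by (intro powr_mono) auto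
      then show ?thesis by simp
    qed
    moreover have "w powr p \<ge> 0" by simp
    ultimately show ?thesis using divide_left_mono[of 2 "2 powr p" "w powr p"] by simp
  qed
  then show ?thesis using True assms by auto
next
  case False
  then have "u > 0" "v > 0" using assms by auto
  then show ?thesis
    using convex_onD[OF powr_convex[OF assms(1)], of "1/2" u v]
    by (simp add: field_simps)
qed

lemma phi_mid:
  fixes a c p :: real
  assumes "p \<ge> 1"
  shows "\<bar>a\<bar> powr p \<le> (\<bar>a - c\<bar> powr p + \<bar>a + c\<bar> powr p) / 2"
proof -
  have "\<bar>(a - c) + (a + c)\<bar> \<le> \<bar>a - c\<bar> + \<bar>a + c\<bar>" by (rule abs_triangle_ineq)
  then have "\<bar>a\<bar> \<le> (\<bar>a - c\<bar> + \<bar>a + c\<bar>) / 2" by simp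
  then have "\<bar>a\<bar> powr p \<le> ((\<bar>a - c\<bar> + \<bar>a + c\<bar>) / 2) powr p"
    using assms by (intro powr_mono2) auto
  also have "\<dots> \<le> (\<bar>a - c\<bar> powr p + \<bar>a + c\<bar> powr p) / 2"
    using mid_pow assms by auto
  finally show ?thesis .
qed

lemma phi_mid_strict:
  fixes c p :: real
  assumes "p \<ge> 1" "c \<noteq> 0"
  shows "0 < (\<bar>c\<bar> powr p + \<bar>c\<bar> powr p) / 2"
  using assms by simp

lemma phi_cont2:
  fixes p c :: real
  assumes "p \<ge> 1"
  shows "continuous_on S (\<lambda>(x, y). \<bar>x - y - c\<bar> powr p)"
proof -
  have "continuous_on S (\<lambda>z. \<bar>fst z - snd z - c\<bar> powr p)"
    using assms by (intro continuous_on_powr' continuous_intros) auto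
  then show ?thesis by (simp add: case_prod_beta)
qed

lemma H_cont:
  fixes p c l' :: real
  assumes "p \<ge> 1"
  shows "continuous_on S (\<lambda>x. integral {-l'..l'} (\<lambda>y. \<bar>x - y - c\<bar> powr p))"
  using integral_continuous_on_param[OF phi_cont2[OF assms, of "S \<times> cbox (-l') l'" c]]
  by simp

lemma inner_cont:
  fixes p c x :: real
  assumes "p \<ge> 1"
  shows "continuous_on S (\<lambda>y. \<bar>x - y - c\<bar> powr p)"
  using assms by (intro continuous_on_powr' continuous_intros) auto

lemma H_sym:
  fixes p c l' x :: real
  shows "integral {-l'..l'} (\<lambda>y. \<bar>x - y - (-c)\<bar> powr p)
       = integral {-l'..l'} (\<lambda>y. \<bar>(-x) - y - c\<bar> powr p)"
proof -
  define G where "G y = \<bar>x - y - (-c)\<bar> powr p" for y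
  have e: "\<bar>(-x) - y - c\<bar> = \<bar>x - (-y) - (-c)\<bar>" for y
  proof -
    have "(-x) - y - c = - (x - (-y) - (-c))" by simp
    then show ?thesis by (simp only: abs_minus_cancel)
  qed
  have "integral {-l'..l'} (\<lambda>y. \<bar>(-x) - y - c\<bar> powr p) = integral {-l'..l'} (\<lambda>y. G (-y))"
    unfolding G_def e ..
  also have "\<dots> = integral {-l'..l'} G"
    using Henstock_Kurzweil_Integration.integral_reflect_real[where f=G and a="-l'" and b="l'"] by simp
  finally show ?thesis unfolding G_def by simp
qed

lemma fp_sym:
  fixes p l l' c :: real
  shows "fp p l l' (-c) = fp p l l' c"
proof -
  define G where "G x = integral {-l'..l'} (\<lambda>y. \<bar>x - y - c\<bar> powr p)" for x
  have "fp p l l' (-c) = integral {-l..l} (\<lambda>x. G (-x))"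
    unfolding fp_def G_def by (simp only: H_sym)
  also have "\<dots> = integral {-l..l} G"
    using Henstock_Kurzweil_Integration.integral_reflect_real[where f=G and a="-l" and b=l] by simp
  also have "\<dots> = fp p l l' c" unfolding fp_def G_def ..
  finally show ?thesis .
qed

lemma lin3:
  fixes f g h :: "real \<Rightarrow> real"
  assumes "f integrable_on S" "g integrable_on S" "h integrable_on S"
  shows "integral S (\<lambda>x. f x + g x - 2 * h x) = integral S f + integral S g - 2 * integral S h"
    and "(\<lambda>x. f x + g x - 2 * h x) integrable_on S"
proof -
  have h2: "(\<lambda>x. 2 * h x) integrable_on S" using assms(3) by simp
  show "integral S (\<lambda>x. f x + g x - 2 * h x) = integral S f + integral S g - 2 * integral S h"
    using assms h2 by (simp add: integral_diff integrable_add integral_add)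
  show "(\<lambda>x. f x + g x - 2 * h x) integrable_on S"
    using assms h2 by (intro integrable_diff integrable_add)
qed

lemma fp_mid:
  fixes p l l' c :: real
  assumes "p \<ge> 1" "l > 0" "l' > 0" "c \<noteq> 0"
  shows "2 * fp p l l' 0 < fp p l l' c + fp p l l' (-c)"
proof -
  define H where "H c x = integral {-l'..l'} (\<lambda>y. \<bar>x - y - c\<bar> powr p)" for c x
  have Hc: "continuous_on S (H d)" for S d unfolding H_def using H_cont[OF assms(1)] by blast
  have HI: "H d integrable_on {-l..l}" for d using Hc integrable_continuous_interval by blast
  have ic: "continuous_on S (\<lambda>y. \<bar>x - y - d\<bar> powr p)" for S x d using inner_cont[OF assms(1)] by blast
  have iI: "(\<lambda>y. \<bar>x - y - d\<bar> powr p) integrable_on {-l'..l'}" for x d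
    using ic integrable_continuous_interval by blast
  have Hsum: "H c x + H (-c) x - 2 * H 0 x = integral {-l'..l'}
      (\<lambda>y. \<bar>x - y - c\<bar> powr p + \<bar>x - y - (-c)\<bar> powr p - 2 * \<bar>x - y - 0\<bar> powr p)" for x
    unfolding H_def by (rule lin3(1)[symmetric]) (rule iI)+
  have Hnn: "H c x + H (-c) x - 2 * H 0 x \<ge> 0" for x
    unfolding Hsum
  proof (rule integral_nonneg)
    show "(\<lambda>y. \<bar>x - y - c\<bar> powr p + \<bar>x - y - (-c)\<bar> powr p - 2 * \<bar>x - y - 0\<bar> powr p) integrable_on {-l'..l'}"
      by (rule lin3(2)) (rule iI)+
    fix y
    show "0 \<le> \<bar>x - y - c\<bar> powr p + \<bar>x - y - (-c)\<bar> powr p - 2 * \<bar>x - y - 0\<bar> powr p"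
      using phi_mid[OF assms(1), of "x - y" c] by simp
  qed
  have H0: "H c 0 + H (-c) 0 - 2 * H 0 0 > 0"
    unfolding Hsum
  proof (rule pos_integral[where t = 0])
    show "continuous_on {-l'..l'} (\<lambda>y. \<bar>0 - y - c\<bar> powr p + \<bar>0 - y - (-c)\<bar> powr p - 2 * \<bar>0 - y - 0\<bar> powr p)"
      by (intro continuous_intros ic)
    fix y
    show "0 \<le> \<bar>0 - y - c\<bar> powr p + \<bar>0 - y - (-c)\<bar> powr p - 2 * \<bar>0 - y - 0\<bar> powr p"
      using phi_mid[OF assms(1), of "0 - y" c] by simp
  qed (use assms in auto)
  have "0 < integral {-l..l} (\<lambda>x. H c x + H (-c) x - 2 * H 0 x)"
  proof (rule pos_integral[where t = 0])
    show "continuous_on {-l..l} (\<lambda>x. H c x + H (-c) x - 2 * H 0 x)"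
      by (intro continuous_on_diff continuous_on_add continuous_on_mult continuous_on_const Hc)
  qed (use assms Hnn H0 in auto)
  also have "\<dots> = fp p l l' c + fp p l l' (-c) - 2 * fp p l l' 0"
    unfolding fp_def H_def[symmetric] by (rule lin3(1)) (rule HI)+
  finally show ?thesis by simp
qed

theorem mainTheorem12:
  fixes p l l' :: real
  assumes "p \<ge> 1" and "l > 0" and "l' > 0"
  shows "is_arg_min (fp p l l') (\<lambda>_. True) 0 \<and> (\<forall>c. is_arg_min (fp p l l') (\<lambda>_. True) c \<longrightarrow> c = 0)"
proof -
  have lt: "fp p l l' 0 < fp p l l' c" if "c \<noteq> 0" for c
    using fp_mid[OF assms that] fp_sym[of p l l' c] by simp
  have "\<not> fp p l l' y < fp p l l' 0" for y
    using lt[of y] by (cases "y = 0") auto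
  moreover have "c = 0" if "is_arg_min (fp p l l') (\<lambda>_. True) c" for c
    using that lt[of c] unfolding is_arg_min_def by blast
  ultimately show ?thesis unfolding is_arg_min_def by blast
qed

end
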